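(* In the SLAR setting, if $(\delta_u,u)$ and $(\delta_v,v)$ are both Nash equilibria of the SLAR game, then $u=v$.
   Context: SLAR setting: $(x,y)$ is drawn from a distribution $\mathcal D$ on $\mathbb R^d\times\{-1,+1\}$, $x=(x_1,\dots,x_d)$ with finite second moments, such that (A1) for each $i$ there is a constant $\mu_i$ with $\mathbb E[x_i\mid y]=y\mu_i$ for $y\in\{-1,1\}$, and (A2) the coordinates $x_1,\dots,x_d$ are mutually independent conditionally on $y$. Fix $\lambda>0$ and a perturbation budget $\varepsilon>0$; $\mathcal B(\varepsilon)=\{a\in\mathbb R^d:\|a\|_\infty\le\varepsilon\}$. A perturbation function is a measurable map $\delta$ assigning to each $(x,y)$ a vector $\delta(x,y)\in\mathcal B(\varepsilon)$. For a perturbation function $\delta$ and $w\in\mathbb R^d$ let $U(\delta,w)=\mathbb E_{(x,y)\sim\mathcal D}[\max(0,1-yw^\top(x+\delta(x,y)))]+\frac{\lambda}{2}\|w\|_2^2$. SLAR game: the adversary chooses a perturbation function $\delta$, the defender chooses $w\in\mathbb R^d$; the adversary's payoff is $U(\delta,w)$ and the defender's is $-U(\delta,w)$. A pair $(\delta^*,w^* )$ is a (pure) Nash equilibrium if $\sup_\delta U(\delta,w^* )\le U(\delta^*,w^* )\le\inf_{w\in\mathbb R^d}U(\delta^*,w)$, the supremum over all perturbation functions. *)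

theory Defs
  imports "HOL-Probability.Probability"
begin

text \<open>The data distribution D on R^d x {-1,+1}: a probability measure on the Borel sets of
  (real^'n) x real, concentrated on labels in {-1,1}, with finite second moments,
  (A1) E[x_i | y] = y mu_i, and (A2) conditional independence of the coordinates given y.\<close>

definition slar_dist :: "((real^'n) \<times> real) measure \<Rightarrow> bool" where
  "slar_dist M \<longleftrightarrow>
     prob_space M \<and> sets M = sets borel \<and>
     (AE p in M. snd p \<in> {-1, 1}) \<and>
     (\<forall>i. integrable M (\<lambda>p. (fst p $ i)\<^sup>2)) \<and>
     (\<exists>\<mu>::'n \<Rightarrow> real. \<forall>i. \<forall>c\<in>{-1, 1::real}.
         (\<integral>p. fst p $ i * indicator {q. snd q = c} p \<partial>M)
           = c * \<mu> i * measure M {p \<in> space M. snd p = c}) \<and>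
     (\<forall>c\<in>{-1, 1::real}. measure M {p \<in> space M. snd p = c} > 0 \<longrightarrow>
         prob_space.indep_vars (uniform_measure M {p \<in> space M. snd p = c})
           (\<lambda>_. borel) (\<lambda>i p. fst p $ i) UNIV)"

definition perturbation :: "real \<Rightarrow> ((real^'n) \<times> real \<Rightarrow> real^'n) \<Rightarrow> bool" where
  "perturbation \<epsilon> \<delta> \<longleftrightarrow>
     \<delta> \<in> borel_measurable (borel :: ((real^'n) \<times> real) measure) \<and>
     (\<forall>p i. \<bar>\<delta> p $ i\<bar> \<le> \<epsilon>)"

definition slar_U :: "((real^'n) \<times> real) measure \<Rightarrow> real \<Rightarrow>
    ((real^'n) \<times> real \<Rightarrow> real^'n) \<Rightarrow> real^'n \<Rightarrow> real" where
  "slar_U M lam \<delta> w =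
     (\<integral>p. max 0 (1 - snd p * (w \<bullet> (fst p + \<delta> p))) \<partial>M) + lam / 2 * (norm w)\<^sup>2"

definition slar_nash :: "((real^'n) \<times> real) measure \<Rightarrow> real \<Rightarrow> real \<Rightarrow>
    ((real^'n) \<times> real \<Rightarrow> real^'n) \<Rightarrow> real^'n \<Rightarrow> bool" where
  "slar_nash M lam \<epsilon> \<delta>s ws \<longleftrightarrow>
     perturbation \<epsilon> \<delta>s \<and>
     (\<forall>\<delta>. perturbation \<epsilon> \<delta> \<longrightarrow> slar_U M lam \<delta> ws \<le> slar_U M lam \<delta>s ws) \<and>
     (\<forall>w. slar_U M lam \<delta>s ws \<le> slar_U M lam \<delta>s w)"

end

theory Submission
  imports Defs
begin

lemma abs_inner_le:
  fixes w x :: "real^'n"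
  shows "\<bar>w \<bullet> x\<bar> \<le> (\<Sum>i\<in>UNIV. \<bar>w$i\<bar> * \<bar>x$i\<bar>)"
  unfolding inner_vec_def
  by (rule order_trans[OF sum_abs]) (simp add: abs_mult)

lemma hinge_integrable:
  fixes M :: "((real^'n) \<times> real) measure"
  assumes D: "slar_dist M" and P: "perturbation \<epsilon> \<delta>"
  shows "integrable M (\<lambda>p. max 0 (1 - snd p * (w \<bullet> (fst p + \<delta> p))))"
proof -
  interpret prob_space M using D unfolding slar_dist_def by auto
  have sM: "sets M = sets borel" using D unfolding slar_dist_def by auto
  have meas_eq: "\<And>N::real measure. measurable M N = measurable borel N"
    by (rule measurable_cong_sets[OF sM refl])
  have dm: "\<delta> \<in> borel_measurable M" using P unfolding perturbation_def measurable_cong_sets[OF sM refl] by auto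
  have db: "\<And>p i. \<bar>\<delta> p $ i\<bar> \<le> \<epsilon>" using P unfolding perturbation_def by auto
  have ae: "AE p in M. snd p \<in> {-1, 1}" using D unfolding slar_dist_def by auto
  have sq: "\<And>i. integrable M (\<lambda>p. (fst p $ i)\<^sup>2)" using D unfolding slar_dist_def by auto
  have xm: "\<And>i. (\<lambda>p. fst p $ i) \<in> borel_measurable M"
    unfolding meas_eq by (intro borel_measurable_continuous_onI continuous_intros)
  have xi: "\<And>i. integrable M (\<lambda>p. fst p $ i)"
    by (rule square_integrable_imp_integrable[OF xm sq])
  define g where "g p = 1 + (\<Sum>i\<in>UNIV. \<bar>w$i\<bar> * \<bar>fst p $ i\<bar>) + (\<Sum>i\<in>UNIV. \<bar>w$i\<bar> * \<epsilon>)" for p :: "(real^'n) \<times> real"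
  have gi1: "integrable M (\<lambda>p. (\<Sum>i\<in>UNIV. \<bar>w$i\<bar> * \<bar>fst p $ i\<bar>))"
    apply (rule Bochner_Integration.integrable_sum) apply (rule integrable_mult_right) apply (rule integrable_abs) by (rule xi)
  have gi: "integrable M g" unfolding g_def
    apply (rule Bochner_Integration.integrable_add)+ using gi1 by auto
  have hm: "(\<lambda>p. max 0 (1 - snd p * (w \<bullet> (fst p + \<delta> p)))) \<in> borel_measurable M"
  proof -
    have [measurable]: "(\<lambda>p. fst p) \<in> borel_measurable M" unfolding measurable_cong_sets[OF sM refl]
      by (intro borel_measurable_continuous_onI continuous_intros)
    have [measurable]: "(\<lambda>p. snd p) \<in> borel_measurable M" unfolding measurable_cong_sets[OF sM refl]
      by (intro borel_measurable_continuous_onI continuous_intros)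
    note dm[measurable]
    show ?thesis by measurable
  qed
  show ?thesis
  proof (rule Bochner_Integration.integrable_bound[OF gi hm])
    show "AE p in M. norm (max 0 (1 - snd p * (w \<bullet> (fst p + \<delta> p)))) \<le> norm (g p)"
      using ae
    proof eventually_elim
      case (elim p)
      have y: "\<bar>snd p\<bar> \<le> 1" using elim by auto
      have a1: "\<bar>w \<bullet> fst p\<bar> \<le> (\<Sum>i\<in>UNIV. \<bar>w$i\<bar> * \<bar>fst p $ i\<bar>)" by (rule abs_inner_le)
      have "\<bar>w \<bullet> \<delta> p\<bar> \<le> (\<Sum>i\<in>UNIV. \<bar>w$i\<bar> * \<bar>\<delta> p $ i\<bar>)" by (rule abs_inner_le)
      also have "\<dots> \<le> (\<Sum>i\<in>UNIV. \<bar>w$i\<bar> * \<epsilon>)"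
        by (intro sum_mono mult_left_mono db) auto
      finally have a2: "\<bar>w \<bullet> \<delta> p\<bar> \<le> (\<Sum>i\<in>UNIV. \<bar>w$i\<bar> * \<epsilon>)" .
      have "\<bar>snd p * (w \<bullet> (fst p + \<delta> p))\<bar> \<le> \<bar>w \<bullet> (fst p + \<delta> p)\<bar>"
        using y by (simp add: abs_mult mult_left_le_one_le)
      also have "\<dots> \<le> \<bar>w \<bullet> fst p\<bar> + \<bar>w \<bullet> \<delta> p\<bar>" by (simp add: inner_add_right)
      finally have b: "\<bar>snd p * (w \<bullet> (fst p + \<delta> p))\<bar> \<le> \<bar>w \<bullet> fst p\<bar> + \<bar>w \<bullet> \<delta> p\<bar>" .
      have "0 \<le> (\<Sum>i\<in>UNIV. \<bar>w$i\<bar> * \<bar>fst p $ i\<bar>)" by (intro sum_nonneg) auto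
      moreover have "0 \<le> (\<Sum>i\<in>UNIV. \<bar>w$i\<bar> * \<epsilon>)" using a2 by linarith
      ultimately show ?case using a1 a2 b unfolding g_def by (simp add: abs_le_iff) linarith
    qed
  qed
qed

lemma norm_mid:
  fixes u v :: "real^'n"
  shows "(norm ((u + v) /\<^sub>R 2))\<^sup>2 = ((norm u)\<^sup>2 + (norm v)\<^sup>2) / 2 - (norm (u - v))\<^sup>2 / 4"
  unfolding power2_norm_eq_inner
  by (simp add: inner_add_left inner_add_right inner_diff_left inner_diff_right inner_commute field_simps)

lemma U_convex:
  fixes M :: "((real^'n) \<times> real) measure"
  assumes D: "slar_dist M" and P: "perturbation \<epsilon> \<delta>"
  shows "slar_U M lam \<delta> ((u + v) /\<^sub>R 2) \<le> (slar_U M lam \<delta> u + slar_U M lam \<delta> v) / 2 - lam / 8 * (norm (u - v))\<^sup>2"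
proof -
  let ?h = "\<lambda>w p. max 0 (1 - snd p * (w \<bullet> (fst p + \<delta> p)))"
  have iu: "integrable M (?h u)" and iv: "integrable M (?h v)" and im: "integrable M (?h ((u + v) /\<^sub>R 2))"
    by (rule hinge_integrable[OF D P])+
  have pt: "?h ((u + v) /\<^sub>R 2) p \<le> (?h u p + ?h v p) / 2" for p
  proof -
    have "1 - snd p * (((u + v) /\<^sub>R 2) \<bullet> (fst p + \<delta> p))
       = ((1 - snd p * (u \<bullet> (fst p + \<delta> p))) + (1 - snd p * (v \<bullet> (fst p + \<delta> p)))) / 2"
      by (simp add: inner_add_left field_simps)
    then show ?thesis by (simp add: max_def)
  qed
  have "(\<integral>p. ?h ((u + v) /\<^sub>R 2) p \<partial>M) \<le> (\<integral>p. (?h u p + ?h v p) / 2 \<partial>M)"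
    by (rule integral_mono[OF im _ pt]) (use iu iv in auto)
  also have "\<dots> = ((\<integral>p. ?h u p \<partial>M) + (\<integral>p. ?h v p \<partial>M)) / 2"
    using iu iv by simp
  finally have a: "(\<integral>p. ?h ((u + v) /\<^sub>R 2) p \<partial>M) \<le> ((\<integral>p. ?h u p \<partial>M) + (\<integral>p. ?h v p \<partial>M)) / 2" .
  show ?thesis unfolding slar_U_def norm_mid using a by (simp add: field_simps)
qed

theorem mainTheorem15:
  fixes M :: "((real^'n) \<times> real) measure"
    and lam \<epsilon> :: real
    and \<delta>u \<delta>v :: "(real^'n) \<times> real \<Rightarrow> real^'n"
    and u v :: "real^'n"
  assumes "slar_dist M" and "lam > 0" and "\<epsilon> > 0"
    and "slar_nash M lam \<epsilon> \<delta>u u" and "slar_nash M lam \<epsilon> \<delta>v v"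
  shows "u = v"
proof -
  define m where "m = (u + v) /\<^sub>R 2"
  define c where "c = lam / 8 * (norm (u - v))\<^sup>2"
  have Pu: "perturbation \<epsilon> \<delta>u" and Pv: "perturbation \<epsilon> \<delta>v"
    using assms(4,5) unfolding slar_nash_def by auto
  have d1: "slar_U M lam \<delta>u u \<le> slar_U M lam \<delta>u m" and d2: "slar_U M lam \<delta>v v \<le> slar_U M lam \<delta>v m"
    using assms(4,5) unfolding slar_nash_def by auto
  have a1: "slar_U M lam \<delta>v u \<le> slar_U M lam \<delta>u u" using assms(4) Pv unfolding slar_nash_def by auto
  have a2: "slar_U M lam \<delta>u v \<le> slar_U M lam \<delta>v v" using assms(5) Pu unfolding slar_nash_def by auto
  have c1: "slar_U M lam \<delta>u m \<le> (slar_U M lam \<delta>u u + slar_U M lam \<delta>u v) / 2 - c"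
    unfolding m_def c_def by (rule U_convex[OF assms(1) Pu])
  have c2: "slar_U M lam \<delta>v m \<le> (slar_U M lam \<delta>v u + slar_U M lam \<delta>v v) / 2 - c"
    unfolding m_def c_def by (rule U_convex[OF assms(1) Pv])
  have "c \<le> 0" using d1 d2 a1 a2 c1 c2 by argo
  then have "(norm (u - v))\<^sup>2 \<le> 0" unfolding c_def using assms(2)
    by (simp add: mult_le_0_iff)
  then show ?thesis by simp
qed

end
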